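(* Let $m,n$ be nonzero integers with $|m|<|n|$ such that $m$ does not divide $n$. Let $u_1,u_2$ be vertices of type $a$ of $\Lambda_{m,n}$ with $u_1<u_2$ or $u_2<u_1$. Then $u_1$ and $u_2$ correspond to adjacent vertices of $T$ if and only if there does not exist any vertex $u_3\in\Lambda_{m,n}^{(0)}\setminus\{u_1,u_2\}$ such that $\mathrm{lk}_\Lambda(u_1)\cap \mathrm{lk}_\Lambda(u_2)\subseteq \mathrm{lk}_\Lambda(u_3)$.
   Context: $\mathrm{BS}(m,n)=\langle a,t\mid ta^mt^{-1}=a^n\rangle$; $\Upsilon_{m,n}$ is its Cayley graph for $\{a,t\}$ (edges $g\to gs$ oriented, labeled $s$); $a$-lines and $t$-lines are the subgraphs spanned by left cosets of $\langle a\rangle$ and $\langle t\rangle$. $\Lambda_{m,n}$ has one vertex per $a$-line or $t$-line (of type $a$ or $t$), adjacent when the lines intersect; $\mathrm{lk}_\Lambda(u)$ is the set of neighbours of $u$. $T$ is the Bass–Serre tree whose vertices are the $a$-lines (= type-$a$ vertices), with one edge oriented from $\ell$ to $\ell'$ for each pair of $a$-lines such that $gt\in\ell'$ for some $g\in\ell$. Partial order: $v_1\le v_2$ if every edge of the geodesic from $v_1$ to $v_2$ in $T$ is oriented toward $v_2$; $<$ denotes strict order. *)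

theory Defs
  imports Main
begin

text \<open>Baumslag--Solitar group BS(m,n) = < a, t | t a^m t^-1 = a^n >, presented
  as words in the letters a, t and their inverses modulo the equivalence
  generated by free cancellation and insertion/deletion of the relator.
  A group element is an equivalence class of words.\<close>

datatype gen = GA | GT

type_synonym letter = "gen \<times> bool"   (* True = positive exponent *)
type_synonym word = "letter list"

definition inv_letter :: "letter \<Rightarrow> letter" where
  "inv_letter x = (fst x, \<not> snd x)"

definition gpow :: "gen \<Rightarrow> int \<Rightarrow> word" where
  "gpow s k = replicate (nat \<bar>k\<bar>) (s, k \<ge> 0)"

definition bs_relator :: "int \<Rightarrow> int \<Rightarrow> word" where
  "bs_relator m n = [(GT, True)] @ gpow GA m @ [(GT, False)] @ gpow GA (- n)"

inductive bs_eq :: "int \<Rightarrow> int \<Rightarrow> word \<Rightarrow> word \<Rightarrow> bool" for m n where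
  bs_refl: "bs_eq m n w w"
| bs_sym: "bs_eq m n u v \<Longrightarrow> bs_eq m n v u"
| bs_trans: "bs_eq m n u v \<Longrightarrow> bs_eq m n v w \<Longrightarrow> bs_eq m n u w"
| bs_cancel: "bs_eq m n (u @ [x, inv_letter x] @ v) (u @ v)"
| bs_rel: "bs_eq m n (u @ bs_relator m n @ v) (u @ v)"

type_synonym bs_elem = "word set"

definition bs_cls :: "int \<Rightarrow> int \<Rightarrow> word \<Rightarrow> bs_elem" where
  "bs_cls m n w = {v. bs_eq m n w v}"

definition aline :: "int \<Rightarrow> int \<Rightarrow> word \<Rightarrow> bs_elem set" where
  "aline m n w = {bs_cls m n (w @ gpow GA k) | k. True}"

definition tline :: "int \<Rightarrow> int \<Rightarrow> word \<Rightarrow> bs_elem set" where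
  "tline m n w = {bs_cls m n (w @ gpow GT k) | k. True}"

text \<open>Vertices of Lambda: tagged lines; tag True = type a, False = type t.\<close>
type_synonym lvert = "bool \<times> bs_elem set"

definition Lverts :: "int \<Rightarrow> int \<Rightarrow> lvert set" where
  "Lverts m n = {(True, aline m n w) | w. True} \<union> {(False, tline m n w) | w. True}"

definition lkL :: "int \<Rightarrow> int \<Rightarrow> lvert \<Rightarrow> lvert set" where
  "lkL m n u = {v \<in> Lverts m n. v \<noteq> u \<and> snd u \<inter> snd v \<noteq> {}}"

definition Tverts :: "int \<Rightarrow> int \<Rightarrow> bs_elem set set" where
  "Tverts m n = {aline m n w | w. True}"

definition Tedge :: "int \<Rightarrow> int \<Rightarrow> bs_elem set \<Rightarrow> bs_elem set \<Rightarrow> bool" where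
  "Tedge m n l l' \<longleftrightarrow> l \<in> Tverts m n \<and> l' \<in> Tverts m n \<and>
     (\<exists>w. bs_cls m n w \<in> l \<and> bs_cls m n (w @ [(GT, True)]) \<in> l')"

definition Tadj :: "int \<Rightarrow> int \<Rightarrow> bs_elem set \<Rightarrow> bs_elem set \<Rightarrow> bool" where
  "Tadj m n l l' \<longleftrightarrow> Tedge m n l l' \<or> Tedge m n l' l"

definition Tpath :: "int \<Rightarrow> int \<Rightarrow> bs_elem set list \<Rightarrow> bool" where
  "Tpath m n p \<longleftrightarrow> p \<noteq> [] \<and> set p \<subseteq> Tverts m n \<and>
     (\<forall>i. i + 1 < length p \<longrightarrow> Tadj m n (p ! i) (p ! (i + 1)))"

definition Tgeodesic :: "int \<Rightarrow> int \<Rightarrow> bs_elem set list \<Rightarrow> bs_elem set \<Rightarrow> bs_elem set \<Rightarrow> bool" where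
  "Tgeodesic m n p v1 v2 \<longleftrightarrow> Tpath m n p \<and> hd p = v1 \<and> last p = v2 \<and>
     (\<forall>q. Tpath m n q \<and> hd q = v1 \<and> last q = v2 \<longrightarrow> length p \<le> length q)"

definition Tle :: "int \<Rightarrow> int \<Rightarrow> bs_elem set \<Rightarrow> bs_elem set \<Rightarrow> bool" where
  "Tle m n v1 v2 \<longleftrightarrow> v1 \<in> Tverts m n \<and> v2 \<in> Tverts m n \<and>
     (\<exists>p. Tgeodesic m n p v1 v2) \<and>
     (\<forall>p. Tgeodesic m n p v1 v2 \<longrightarrow>
        (\<forall>i. i + 1 < length p \<longrightarrow> Tedge m n (p ! i) (p ! (i + 1))))"

definition Tless :: "int \<Rightarrow> int \<Rightarrow> bs_elem set \<Rightarrow> bs_elem set \<Rightarrow> bool" where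
  "Tless m n v1 v2 \<longleftrightarrow> Tle m n v1 v2 \<and> v1 \<noteq> v2"

end

theory Submission
  imports Defs
begin


lemma bs_eq_trans'[trans]: "bs_eq m n u v \<Longrightarrow> bs_eq m n v w \<Longrightarrow> bs_eq m n u w"
  by (rule bs_trans)

lemma bs_eq_cong: "bs_eq m n u v \<Longrightarrow> bs_eq m n (p @ u @ q) (p @ v @ q)"
proof (induction arbitrary: p q rule: bs_eq.induct)
  case (bs_refl w) then show ?case by (rule bs_eq.bs_refl)
next
  case (bs_sym u v) then show ?case by (simp add: bs_eq.bs_sym)
next
  case (bs_trans u v w) then show ?case by (meson bs_eq.bs_trans)
next
  case (bs_cancel u x v)
  show ?case using bs_eq.bs_cancel[of m n "p @ u" x "v @ q"] by simp
next
  case (bs_rel u v)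
  show ?case using bs_eq.bs_rel[of m n "p @ u" "v @ q"] by simp
qed

lemma bs_eq_congL: "bs_eq m n u v \<Longrightarrow> bs_eq m n (p @ u) (p @ v)"
  using bs_eq_cong[of m n u v p "[]"] by simp
lemma bs_eq_congR: "bs_eq m n u v \<Longrightarrow> bs_eq m n (u @ q) (v @ q)"
  using bs_eq_cong[of m n u v "[]" q] by simp

lemma cancel2: "bs_eq m n (p @ [x, inv_letter x] @ q) (p @ q)"
  by (rule bs_cancel)

lemma gpow_step_up: "bs_eq m n (gpow s i @ [(s,True)]) (gpow s (i+1))"
proof (cases "i \<ge> 0")
  case True
  then have "nat \<bar>i+1\<bar> = Suc (nat \<bar>i\<bar>)" by simp
  then show ?thesis using True by (simp add: gpow_def replicate_append_same bs_refl)
next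
  case False
  then obtain j where j: "nat \<bar>i\<bar> = Suc j" "nat \<bar>i+1\<bar> = j"
    by (intro that[of "nat \<bar>i\<bar> - 1"]) auto
  have "gpow s i @ [(s,True)] = replicate j (s,False) @ [(s,False), inv_letter (s,False)] @ []"
    using False j by (simp add: gpow_def inv_letter_def replicate_append_same[symmetric])
  also have "bs_eq m n \<dots> (replicate j (s,False) @ [])" by (rule bs_cancel)
  also have "replicate j (s,False) @ [] = gpow s (i+1)"
    using False j by (cases j) (auto simp: gpow_def)
  finally show ?thesis .
qed

lemma gpow_step_down: "bs_eq m n (gpow s i @ [(s,False)]) (gpow s (i - 1))"
proof (cases "i \<le> 0")
  case True
  then have "nat \<bar>i - 1\<bar> = Suc (nat \<bar>i\<bar>)" by simp
  then show ?thesis using True by (cases "i = 0") (simp_all add: gpow_def replicate_append_same bs_refl)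
next
  case False
  then obtain j where j: "nat \<bar>i\<bar> = Suc j" "nat \<bar>i - 1\<bar> = j"
    by (intro that[of "nat \<bar>i\<bar> - 1"]) auto
  have "gpow s i @ [(s,False)] = replicate j (s,True) @ [(s,True), inv_letter (s,True)] @ []"
    using False j by (simp add: gpow_def inv_letter_def replicate_append_same[symmetric])
  also have "bs_eq m n \<dots> (replicate j (s,True) @ [])" by (rule bs_cancel)
  also have "replicate j (s,True) @ [] = gpow s (i - 1)"
    using False j by (auto simp: gpow_def)
  finally show ?thesis .
qed

lemma gpow_add: "bs_eq m n (gpow s i @ gpow s j) (gpow s (i + j))"
proof (induction j rule: int_induct[where k = 0])
  case base then show ?case by (simp add: gpow_def bs_refl)
next
  case (step1 j)
  have "gpow s (j+1) = gpow s j @ [(s,True)]" using step1 by (simp add: gpow_def nat_add_distrib replicate_append_same)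
  then have "gpow s i @ gpow s (j+1) = (gpow s i @ gpow s j) @ [(s,True)]" by simp
  also have "bs_eq m n \<dots> (gpow s (i+j) @ [(s,True)])" using step1(2) by (rule bs_eq_congR)
  also have "bs_eq m n \<dots> (gpow s (i+j+1))" by (rule gpow_step_up)
  finally show ?case by (simp add: add.assoc)
next
  case (step2 j)
  have "nat \<bar>j - 1\<bar> = Suc (nat \<bar>j\<bar>)" using step2(1) by simp
  then have "gpow s (j - 1) = gpow s j @ [(s,False)]" using step2(1)
    by (cases "j = 0") (simp_all add: gpow_def replicate_append_same)
  then have "gpow s i @ gpow s (j - 1) = (gpow s i @ gpow s j) @ [(s,False)]" by simp
  also have "bs_eq m n \<dots> (gpow s (i+j) @ [(s,False)])" using step2(2) by (rule bs_eq_congR)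
  also have "bs_eq m n \<dots> (gpow s (i+j - 1))" by (rule gpow_step_down)
  finally show ?case by (simp add: algebra_simps)
qed

lemma gpow0[simp]: "gpow s 0 = []" by (simp add: gpow_def)
lemma gpow1: "gpow s 1 = [(s,True)]" by (simp add: gpow_def)
lemma gpowm1: "gpow s (-1) = [(s,False)]" by (simp add: gpow_def)

lemma gpow_inv: "bs_eq m n (gpow s (-i) @ gpow s i) []"
  using gpow_add[of m n s "-i" i] by simp
lemma gpow_inv': "bs_eq m n (gpow s i @ gpow s (-i)) []"
  using gpow_add[of m n s i "-i"] by simp

lemma conj_neg:
  assumes "bs_eq m n (gpow GA p @ y) (y @ gpow GA q)"
  shows "bs_eq m n (gpow GA (-p) @ y) (y @ gpow GA (-q))"
proof -
  have "bs_eq m n (gpow GA (-p) @ y @ gpow GA q @ gpow GA (-q)) (gpow GA (-p) @ y @ [])"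
    using bs_eq_cong[OF gpow_inv'[of m n GA q], of "gpow GA (-p) @ y" "[]"] by simp
  then have 1: "bs_eq m n (gpow GA (-p) @ y) (gpow GA (-p) @ y @ gpow GA q @ gpow GA (-q))"
    by (simp add: bs_sym)
  have 2: "bs_eq m n (gpow GA (-p) @ y @ gpow GA q @ gpow GA (-q)) (gpow GA (-p) @ gpow GA p @ y @ gpow GA (-q))"
    using bs_eq_cong[OF bs_sym[OF assms], of "gpow GA (-p)" "gpow GA (-q)"] by simp
  have 3: "bs_eq m n (gpow GA (-p) @ gpow GA p @ y @ gpow GA (-q)) (y @ gpow GA (-q))"
    using bs_eq_congR[OF gpow_inv[of m n GA p], of "y @ gpow GA (-q)"] by simp
  show ?thesis using bs_trans[OF bs_trans[OF 1 2] 3] .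
qed

lemma conj_pow:
  assumes "bs_eq m n (gpow GA p @ y) (y @ gpow GA q)"
  shows "bs_eq m n (gpow GA (j*p) @ y) (y @ gpow GA (j*q))"
proof (induction j rule: int_induct[where k = 0])
  case base then show ?case by (simp add: bs_refl)
next
  case (step1 j)
  have "bs_eq m n (gpow GA ((j+1)*p) @ y) ((gpow GA (j*p) @ gpow GA p) @ y)"
    by (rule bs_eq_congR, rule bs_sym) (simp only: distrib_right mult_1 gpow_add)
  also have "bs_eq m n ((gpow GA (j*p) @ gpow GA p) @ y) (gpow GA (j*p) @ (y @ gpow GA q))"
    using bs_eq_congL[OF assms, of "gpow GA (j*p)"] by simp
  also have "bs_eq m n (gpow GA (j*p) @ (y @ gpow GA q)) ((y @ gpow GA (j*q)) @ gpow GA q)"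
    using bs_eq_congR[OF step1(2), of "gpow GA q"] by simp
  also have "bs_eq m n ((y @ gpow GA (j*q)) @ gpow GA q) (y @ gpow GA ((j+1)*q))"
    using bs_eq_congL[OF gpow_add[of m n GA "j*q" q], of y] by (simp add: algebra_simps)
  finally show ?case .
next
  case (step2 j)
  have "bs_eq m n (gpow GA ((j - 1)*p) @ y) ((gpow GA (j*p) @ gpow GA (-p)) @ y)"
    by (rule bs_eq_congR, rule bs_sym) (metis gpow_add left_diff_distrib mult_1 diff_conv_add_uminus)
  also have "bs_eq m n ((gpow GA (j*p) @ gpow GA (-p)) @ y) (gpow GA (j*p) @ (y @ gpow GA (-q)))"
    using bs_eq_congL[OF conj_neg[OF assms], of "gpow GA (j*p)"] by simp
  also have "bs_eq m n (gpow GA (j*p) @ (y @ gpow GA (-q))) ((y @ gpow GA (j*q)) @ gpow GA (-q))"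
    using bs_eq_congR[OF step2(2), of "gpow GA (-q)"] by simp
  also have "bs_eq m n ((y @ gpow GA (j*q)) @ gpow GA (-q)) (y @ gpow GA ((j - 1)*q))"
    using bs_eq_congL[OF gpow_add[of m n GA "j*q" "-q"], of y] by (simp add: algebra_simps)
  finally show ?case .
qed

lemma rel_T1: "bs_eq m n (gpow GA n @ [(GT,True)]) ([(GT,True)] @ gpow GA m)"
proof -
  have "bs_eq m n ([] @ bs_relator m n @ (gpow GA n @ [(GT,True)])) ([] @ (gpow GA n @ [(GT,True)]))"
    by (rule bs_rel)
  then have 1: "bs_eq m n (gpow GA n @ [(GT,True)]) ([(GT,True)] @ gpow GA m @ [(GT,False)] @ (gpow GA (-n) @ gpow GA n) @ [(GT,True)])"
    by (simp add: bs_relator_def bs_sym)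
  have 2: "bs_eq m n (([(GT,True)] @ gpow GA m @ [(GT,False)]) @ (gpow GA (-n) @ gpow GA n) @ [(GT,True)])
     (([(GT,True)] @ gpow GA m @ [(GT,False)]) @ [] @ [(GT,True)])"
    by (rule bs_eq_cong) (rule gpow_inv)
  have 3: "bs_eq m n (([(GT,True)] @ gpow GA m) @ [(GT,False), inv_letter (GT,False)] @ []) (([(GT,True)] @ gpow GA m) @ [])"
    by (rule bs_cancel)
  show ?thesis using bs_trans[OF bs_trans[OF 1 _] 3] 2 by (simp add: inv_letter_def)
qed

lemma rel_F1: "bs_eq m n (gpow GA m @ [(GT,False)]) ([(GT,False)] @ gpow GA n)"
proof -
  have 1: "bs_eq m n ([(GT,False)] @ (gpow GA n @ [(GT,True)]) @ [(GT,False)]) ([(GT,False)] @ ([(GT,True)] @ gpow GA m) @ [(GT,False)])"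
    by (rule bs_eq_cong) (rule rel_T1)
  have 2: "bs_eq m n ([] @ [(GT,False), inv_letter (GT,False)] @ (gpow GA m @ [(GT,False)])) ([] @ (gpow GA m @ [(GT,False)]))"
    by (rule bs_cancel)
  have 3: "bs_eq m n (([(GT,False)] @ gpow GA n) @ [(GT,True), inv_letter (GT,True)] @ []) (([(GT,False)] @ gpow GA n) @ [])"
    by (rule bs_cancel)
  show ?thesis using bs_trans[OF bs_trans[OF bs_sym[OF 3[simplified inv_letter_def, simplified]] 1[simplified]] 2[simplified inv_letter_def, simplified]]
    by (simp add: bs_sym)
qed

lemma rel_T: "bs_eq m n (gpow GA (j*n) @ [(GT,True)]) ([(GT,True)] @ gpow GA (j*m))"
  by (rule conj_pow[OF rel_T1])
lemma rel_F: "bs_eq m n (gpow GA (j*m) @ [(GT,False)]) ([(GT,False)] @ gpow GA (j*n))"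
  by (rule conj_pow[OF rel_F1])

lemma cls_eq_iff: "bs_cls m n u = bs_cls m n v \<longleftrightarrow> bs_eq m n u v"
proof
  assume "bs_cls m n u = bs_cls m n v"
  moreover have "v \<in> bs_cls m n v" by (simp add: bs_cls_def bs_refl)
  ultimately have "v \<in> bs_cls m n u" by simp
  then show "bs_eq m n u v" by (simp add: bs_cls_def)
next
  assume "bs_eq m n u v"
  then show "bs_cls m n u = bs_cls m n v"
    unfolding bs_cls_def by (auto intro: bs_trans bs_sym)
qed



fun acta :: "int \<Rightarrow> int \<Rightarrow> int \<Rightarrow> (int \<times> bool) list \<Rightarrow> (int \<times> bool) list" where
  "acta m n k [] = []"
| "acta m n k ((r,e)#s) = ((r+k) mod \<bar>if e then n else m\<bar>, e) #
     acta m n (((r+k) div \<bar>if e then n else m\<bar>) * sgn (if e then n else m) * (if e then m else n)) s"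

fun nf :: "int \<Rightarrow> int \<Rightarrow> (int \<times> bool) list \<Rightarrow> bool" where
  "nf m n [] = True"
| "nf m n ((r,e)#s) = (0 \<le> r \<and> r < \<bar>if e then n else m\<bar> \<and> nf m n s \<and> (s = [] \<or> hd s \<noteq> (0, \<not> e)))"

definition tlet :: "bool \<Rightarrow> (int \<times> bool) list \<Rightarrow> (int \<times> bool) list" where
  "tlet e s = (if s \<noteq> [] \<and> hd s = (0, \<not> e) then tl s else (0,e)#s)"

definition al :: "int \<Rightarrow> int \<Rightarrow> letter \<Rightarrow> (int \<times> bool) list \<Rightarrow> (int \<times> bool) list" where
  "al m n x = (case fst x of GA \<Rightarrow> acta m n (if snd x then 1 else -1) | GT \<Rightarrow> tlet (snd x))"

definition act :: "int \<Rightarrow> int \<Rightarrow> word \<Rightarrow> (int \<times> bool) list \<Rightarrow> (int \<times> bool) list" where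
  "act m n w s = foldr (al m n) w s"

lemma divmod_carry:
  fixes M :: int assumes "M \<noteq> 0"
  shows "x div M + (x mod M + k) div M = (x + k) div M"
proof -
  have "x + k = (x mod M + k) + (x div M) * M" by simp
  then have "(x + k) div M = ((x mod M + k) + (x div M) * M) div M" by simp
  also have "\<dots> = x div M + (x mod M + k) div M" using assms by (rule div_mult_self1)
  finally show ?thesis by simp
qed

lemma acta_add: "acta m n k (acta m n j s) = acta m n (j + k) s"
proof (induction s arbitrary: j k)
  case Nil then show ?case by simp
next
  case (Cons x s)
  obtain r e where x: "x = (r,e)" by (cases x)
  define M where "M = \<bar>if e then n else m\<bar>"
  define S where "S = sgn (if e then n else m) * (if e then m else n)"
  show ?case
  proof (cases "M = 0")
    case True
    then show ?thesis using Cons by (simp add: x M_def[symmetric] S_def[symmetric] algebra_simps)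
  next
    case False
    have 1: "((r + j) mod M + k) mod M = (r + (j + k)) mod M" by (simp add: mod_add_left_eq add.assoc)
    have "(r + j) div M * S + ((r + j) mod M + k) div M * S = ((r + j) div M + ((r + j) mod M + k) div M) * S"
      by (simp add: distrib_right)
    also have "\<dots> = (r + (j + k)) div M * S" using divmod_carry[OF False, of "r+j" k] by (simp add: add.assoc)
    finally have 2: "(r + j) div M * S + ((r + j) mod M + k) div M * S = (r + (j + k)) div M * S" .
    show ?thesis using Cons 1 2 by (simp add: x M_def[symmetric] S_def[symmetric] mult.assoc)
  qed
qed

lemma acta_0: "nf m n s \<Longrightarrow> acta m n 0 s = s"
proof (induction s)
  case Nil then show ?case by simp
next
  case (Cons x s) then show ?case by (cases x) auto
qed

lemma acta_snd: "map snd (acta m n k s) = map snd s"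
  by (induction s arbitrary: k rule: nf.induct) auto

lemma acta_length: "length (acta m n k s) = length s"
  using acta_snd[of m n k s] by (metis length_map)

lemma mod_mult_multiple: "(r + q * c * N) mod \<bar>N\<bar> = r mod \<bar>N\<bar>" for r q c N :: int
proof -
  have "q * c * N = (q * c * sgn N) * \<bar>N\<bar>" by (simp add: abs_sgn mult.assoc mult.left_commute)
  then show ?thesis by (metis mod_mult_self1)
qed

lemma nf_acta: assumes "m \<noteq> 0" "n \<noteq> 0" shows "nf m n s \<Longrightarrow> nf m n (acta m n k s)"
proof (induction s arbitrary: k)
  case Nil then show ?case by simp
next
  case (Cons x s)
  obtain r e where x: "x = (r,e)" by (cases x)
  define M where "M = (if e then n else m)"
  define N where "N = (if e then m else n)"
  define c where "c = ((r+k) div \<bar>M\<bar>) * sgn M * N"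
  have M0: "M \<noteq> 0" using assms by (simp add: M_def)
  have eq: "acta m n k (x#s) = ((r+k) mod \<bar>M\<bar>, e) # acta m n c s"
    by (simp add: x M_def N_def c_def)
  have nfs: "nf m n s" and pin: "s = [] \<or> hd s \<noteq> (0, \<not> e)" using Cons.prems by (auto simp: x)
  have tail: "nf m n (acta m n c s)" using Cons.IH nfs by simp
  have pin2: "acta m n c s = [] \<or> hd (acta m n c s) \<noteq> (0, \<not> e)"
  proof (cases s)
    case Nil then show ?thesis by simp
  next
    case (Cons y s2)
    obtain r2 e2 where y: "y = (r2, e2)" by (cases y)
    show ?thesis
    proof (cases "e2 = (\<not> e)")
      case False then show ?thesis by (simp add: Cons y)
    next
      case True
      have r2: "0 \<le> r2" "r2 < \<bar>N\<bar>" "r2 \<noteq> 0" using nfs pin by (auto simp: Cons y True N_def)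
      have "(r2 + c) mod \<bar>N\<bar> = r2 mod \<bar>N\<bar>" unfolding c_def by (rule mod_mult_multiple)
      also have "\<dots> = r2" using r2 by simp
      finally show ?thesis using r2 True by (auto simp: Cons y N_def)
    qed
  qed
  show ?case unfolding eq using M0 tail pin2 by (simp add: M_def)
qed

lemma nf_tlet: assumes "m \<noteq> 0" "n \<noteq> 0" "nf m n s" shows "nf m n (tlet e s)"
proof (cases "s \<noteq> [] \<and> hd s = (0, \<not> e)")
  case True
  then obtain s' where "s = (0, \<not> e) # s'" by (cases s) auto
  then show ?thesis using assms True by (simp add: tlet_def)
next
  case False
  then show ?thesis using assms by (auto simp: tlet_def)
qed

lemma tlet_inv: assumes "nf m n s" shows "tlet (\<not> e) (tlet e s) = s"
proof (cases "s \<noteq> [] \<and> hd s = (0, \<not> e)")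
  case True
  then obtain s' where s: "s = (0, \<not> e) # s'" by (cases s) auto
  have "s' = [] \<or> hd s' \<noteq> (0, e)" using assms s by simp
  then show ?thesis using s by (auto simp: tlet_def)
next
  case False
  then show ?thesis by (auto simp: tlet_def)
qed

lemma nf_al: assumes "m \<noteq> 0" "n \<noteq> 0" "nf m n s" shows "nf m n (al m n x s)"
  using assms nf_acta nf_tlet by (cases x; cases "fst x") (auto simp: al_def)

lemma al_inv: assumes "nf m n s" shows "al m n (inv_letter x) (al m n x s) = s"
proof -
  obtain g b where x: "x = (g,b)" by (cases x)
  show ?thesis
  proof (cases g)
    case GA then show ?thesis using assms by (cases b) (simp_all add: x al_def inv_letter_def acta_add acta_0)
  next
    case GT then show ?thesis using assms tlet_inv[of m n s b] by (simp add: x al_def inv_letter_def)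
  qed
qed

lemma act_append: "act m n (u @ v) s = act m n u (act m n v s)"
  by (simp add: act_def)
lemma act_Nil[simp]: "act m n [] s = s" by (simp add: act_def)
lemma act_Cons: "act m n (x # w) s = al m n x (act m n w s)" by (simp add: act_def)

lemma nf_act: assumes "m \<noteq> 0" "n \<noteq> 0" "nf m n s" shows "nf m n (act m n w s)"
  by (induction w) (simp_all add: assms act_Cons nf_al)

lemma act_gpowA: assumes "nf m n s" shows "act m n (gpow GA k) s = acta m n k s"
proof -
  have pos: "act m n (replicate j (GA,True)) s = acta m n (int j) s" for j
    by (induction j) (simp_all add: assms acta_0 act_Cons al_def acta_add add.commute)
  have neg: "act m n (replicate j (GA,False)) s = acta m n (- int j) s" for j
    by (induction j) (simp_all add: assms acta_0 act_Cons al_def acta_add add.commute)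
  show ?thesis
    by (cases "k \<ge> 0") (simp_all add: gpow_def pos neg)
qed

lemma div_abs_self: "x \<noteq> (0::int) \<Longrightarrow> x div \<bar>x\<bar> = sgn x"
  by (metis abs_eq_0 nonzero_mult_div_cancel_right sgn_mult_abs)
lemma mod_abs_self: "x mod \<bar>x\<bar> = (0::int)"
  by simp
lemma sgn_sq: "x \<noteq> (0::int) \<Longrightarrow> sgn x * sgn x = 1"
  by (simp add: sgn_if)

lemma tlet_comm: assumes "nf m n s" "n \<noteq> 0" "m \<noteq> 0"
  shows "tlet False (acta m n n s) = acta m n m (tlet False s)"
proof (cases s)
  case Nil then show ?thesis by (simp add: tlet_def)
next
  case (Cons x s')
  obtain r e where x: "x = (r,e)" by (cases x)
  show ?thesis
  proof (cases e)
    case True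
    have r: "0 \<le> r" "r < \<bar>n\<bar>" using assms by (simp_all add: Cons x True)
    have rn: "r + n = r + sgn n * \<bar>n\<bar>" by (simp add: sgn_mult_abs)
    then have "(r + n) mod \<bar>n\<bar> = r mod \<bar>n\<bar>" by (metis mod_mult_self1)
    then have 1: "(r + n) mod \<bar>n\<bar> = r" using r by simp
    have "(r + n) div \<bar>n\<bar> = sgn n + r div \<bar>n\<bar>" using rn assms by (metis abs_0_eq div_mult_self1)
    then have 2: "(r + n) div \<bar>n\<bar> = sgn n" using r by simp
    have 3: "sgn n * sgn n * m = m" using assms by (simp add: sgn_if)
    have a: "acta m n n s = (r, True) # acta m n m s'" using 1 2 3 assms(2) by (simp add: Cons x True)
    have b: "(m mod \<bar>m\<bar>) = 0" "(m div \<bar>m\<bar>) * sgn m * n = n" using assms by (simp_all add: div_abs_self sgn_sq)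
    have c: "acta m n m ((0,False)#s) = (0,False) # acta m n n s" using assms by (simp add: div_abs_self sgn_sq)
    show ?thesis
    proof (cases "r = 0")
      case True
      then show ?thesis using a by (simp add: tlet_def Cons x \<open>e\<close>)
    next
      case False
      have "tlet False s = (0,False)#s" using False by (simp add: tlet_def Cons x)
      moreover have "tlet False (acta m n n s) = (0,False) # acta m n n s" using False a by (simp add: tlet_def)
      ultimately show ?thesis using c by simp
    qed
  next
    case False
    have b: "(m mod \<bar>m\<bar>) = 0" "(m div \<bar>m\<bar>) * sgn m * n = n" using assms by (simp_all add: div_abs_self sgn_sq)
    show ?thesis using assms by (simp add: Cons x False tlet_def div_abs_self sgn_sq)
  qed
qed

lemma act_rel: assumes "nf m n s" "m \<noteq> 0" "n \<noteq> 0" shows "act m n (bs_relator m n) s = s"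
proof -
  define s1 where "s1 = acta m n (-n) s"
  have nf1: "nf m n s1" using nf_acta assms by (simp add: s1_def)
  have nf2: "nf m n (tlet False s1)" using nf_tlet[OF assms(2,3) nf1] .
  have "acta m n n s1 = s" using acta_0[OF assms(1)] by (simp add: s1_def acta_add)
  then have e: "acta m n m (tlet False s1) = tlet False s" using tlet_comm[OF nf1 assms(3,2)] by simp
  have "act m n (bs_relator m n) s = tlet True (acta m n m (tlet False s1))"
    using assms nf1 nf2 by (simp add: bs_relator_def act_append act_Cons act_gpowA s1_def al_def)
  also have "\<dots> = s" using e tlet_inv[OF assms(1), of False] by simp
  finally show ?thesis .
qed

lemma inv_inv[simp]: "inv_letter (inv_letter x) = x" by (simp add: inv_letter_def)

lemma act_resp: assumes "m \<noteq> 0" "n \<noteq> 0"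
  shows "bs_eq m n u v \<Longrightarrow> nf m n s \<Longrightarrow> act m n u s = act m n v s"
proof (induction arbitrary: s rule: bs_eq.induct)
  case (bs_refl w) then show ?case by simp
next
  case (bs_sym u v) then show ?case by simp
next
  case (bs_trans u v w) then show ?case by simp
next
  case (bs_cancel u x v)
  have "nf m n (act m n v s)" using nf_act assms bs_cancel by simp
  then show ?case using al_inv[of m n _ "inv_letter x"] by (simp add: act_append act_Cons)
next
  case (bs_rel u v)
  have "nf m n (act m n v s)" using nf_act assms bs_rel by simp
  then show ?case using act_rel assms by (simp add: act_append)
qed

fun nfword :: "(int \<times> bool) list \<Rightarrow> word" where
  "nfword [] = []"
| "nfword ((r,e)#s) = gpow GA r @ [(GT,e)] @ nfword s"

lemma relE: assumes "m \<noteq> 0" "n \<noteq> 0"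
  shows "bs_eq m n (gpow GA (q * \<bar>if e then n else m\<bar>) @ [(GT,e)])
     ([(GT,e)] @ gpow GA (q * sgn (if e then n else m) * (if e then m else n)))"
proof (cases e)
  case True
  have h: "q * \<bar>n\<bar> = (q * sgn n) * n" by (simp add: abs_sgn mult.assoc)
  have "bs_eq m n (gpow GA (q * \<bar>n\<bar>) @ [(GT,True)]) ([(GT,True)] @ gpow GA (q * sgn n * m))"
    using rel_T[of m n "q * sgn n"] h by metis
  then show ?thesis using True by simp
next
  case False
  have h: "q * \<bar>m\<bar> = (q * sgn m) * m" by (simp add: abs_sgn mult.assoc)
  have "bs_eq m n (gpow GA (q * \<bar>m\<bar>) @ [(GT,False)]) ([(GT,False)] @ gpow GA (q * sgn m * n))"
    using rel_F[of m n "q * sgn m"] h by metis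
  then show ?thesis using False by simp
qed

lemma AL: assumes "m \<noteq> 0" "n \<noteq> 0"
  shows "\<exists>k'. bs_eq m n (gpow GA k @ nfword s) (nfword (acta m n k s) @ gpow GA k')"
proof (induction s arbitrary: k)
  case Nil then show ?case by (auto intro: bs_refl)
next
  case (Cons x s)
  obtain r e where x: "x = (r,e)" by (cases x)
  define M where "M = (if e then n else m)"
  define N where "N = (if e then m else n)"
  define r' where "r' = (r+k) mod \<bar>M\<bar>"
  define q where "q = (r+k) div \<bar>M\<bar>"
  define c where "c = q * sgn M * N"
  have eq: "acta m n k (x#s) = (r', e) # acta m n c s"
    by (simp add: x M_def N_def c_def r'_def q_def)
  obtain k' where IH: "bs_eq m n (gpow GA c @ nfword s) (nfword (acta m n c s) @ gpow GA k')"
    using Cons.IH by blast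
  have kr: "k + r = r' + q * \<bar>M\<bar>" by (simp add: r'_def q_def add.commute)
  have "gpow GA k @ nfword (x#s) = (gpow GA k @ gpow GA r) @ ([(GT,e)] @ nfword s)" by (simp add: x)
  also have "bs_eq m n \<dots> (gpow GA (r' + q * \<bar>M\<bar>) @ ([(GT,e)] @ nfword s))"
    using bs_eq_congR[OF gpow_add[of m n GA k r]] kr by simp
  also have "bs_eq m n \<dots> ((gpow GA r' @ gpow GA (q * \<bar>M\<bar>)) @ ([(GT,e)] @ nfword s))"
    by (rule bs_eq_congR, rule bs_sym, rule gpow_add)
  also have "(gpow GA r' @ gpow GA (q * \<bar>M\<bar>)) @ ([(GT,e)] @ nfword s) = gpow GA r' @ (gpow GA (q * \<bar>M\<bar>) @ [(GT,e)]) @ nfword s" by simp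
  also have "bs_eq m n \<dots> (gpow GA r' @ ([(GT,e)] @ gpow GA c) @ nfword s)"
    unfolding c_def M_def N_def by (rule bs_eq_cong, rule relE[OF assms])
  also have "gpow GA r' @ ([(GT,e)] @ gpow GA c) @ nfword s = (gpow GA r' @ [(GT,e)]) @ (gpow GA c @ nfword s)" by simp
  also have "bs_eq m n \<dots> ((gpow GA r' @ [(GT,e)]) @ (nfword (acta m n c s) @ gpow GA k'))"
    by (rule bs_eq_congL, rule IH)
  also have "\<dots> = nfword (acta m n k (x#s)) @ gpow GA k'" by (simp add: eq)
  finally show ?case by blast
qed

lemma SL: assumes "m \<noteq> 0" "n \<noteq> 0" "nf m n s"
  shows "\<exists>k'. bs_eq m n (x # nfword s) (nfword (al m n x s) @ gpow GA k')"
proof -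
  obtain g b where x: "x = (g,b)" by (cases x)
  show ?thesis
  proof (cases g)
    case GA
    show ?thesis
    proof (cases b)
      case True
      show ?thesis using AL[OF assms(1,2), of 1 s] by (simp add: x GA True al_def gpow1)
    next
      case False
      show ?thesis using AL[OF assms(1,2), of "-1" s] by (simp add: x GA False al_def gpowm1)
    qed
  next
    case GT
    show ?thesis
    proof (cases "s \<noteq> [] \<and> hd s = (0, \<not> b)")
      case True
      then obtain s' where s: "s = (0, \<not> b) # s'" by (cases s) auto
      have "bs_eq m n ([] @ [x, inv_letter x] @ nfword s') ([] @ nfword s')" by (rule bs_cancel)
      then have "bs_eq m n (x # nfword s) (nfword (al m n x s) @ gpow GA 0)"
        by (simp add: s x GT al_def tlet_def inv_letter_def)
      then show ?thesis by blast
    next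
      case False
      then have "x # nfword s = nfword (al m n x s) @ gpow GA 0" by (auto simp: x GT al_def tlet_def)
      then show ?thesis by (intro exI[of _ 0]) (simp add: bs_refl)
    qed
  qed
qed

lemma L2: assumes "m \<noteq> 0" "n \<noteq> 0"
  shows "\<exists>k. bs_eq m n w (nfword (act m n w []) @ gpow GA k)"
proof (induction w)
  case Nil show ?case by (rule exI[of _ 0]) (simp add: bs_refl)
next
  case (Cons x w)
  obtain k where k: "bs_eq m n w (nfword (act m n w []) @ gpow GA k)" using Cons by blast
  have nfs: "nf m n (act m n w [])" using nf_act assms by simp
  obtain k' where k': "bs_eq m n (x # nfword (act m n w [])) (nfword (al m n x (act m n w [])) @ gpow GA k')"
    using SL[OF assms nfs] by blast
  have "x # w = [x] @ w" by simp
  also have "bs_eq m n \<dots> ([x] @ (nfword (act m n w []) @ gpow GA k))" by (rule bs_eq_congL, rule k)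
  also have "\<dots> = (x # nfword (act m n w [])) @ gpow GA k" by simp
  also have "bs_eq m n \<dots> ((nfword (al m n x (act m n w [])) @ gpow GA k') @ gpow GA k)" by (rule bs_eq_congR, rule k')
  also have "\<dots> = nfword (act m n (x#w) []) @ (gpow GA k' @ gpow GA k)" by (simp add: act_Cons)
  also have "bs_eq m n \<dots> (nfword (act m n (x#w) []) @ gpow GA (k' + k))" by (rule bs_eq_congL, rule gpow_add)
  finally show ?case by blast
qed



lemma cls_app: "bs_eq m n u v \<Longrightarrow> bs_cls m n (u @ q) = bs_cls m n (v @ q)"
  by (simp add: cls_eq_iff bs_eq_congR)

lemma K: assumes "m \<noteq> 0" "n \<noteq> 0"
  shows "bs_cls m n v \<in> aline m n v' \<longleftrightarrow> act m n v [] = act m n v' []"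
proof
  assume "bs_cls m n v \<in> aline m n v'"
  then obtain k where "bs_cls m n v = bs_cls m n (v' @ gpow GA k)" by (auto simp: aline_def)
  then have "bs_eq m n v (v' @ gpow GA k)" by (simp add: cls_eq_iff)
  then have "act m n v [] = act m n (v' @ gpow GA k) []" using act_resp[OF assms] by simp
  then show "act m n v [] = act m n v' []" by (simp add: act_append act_gpowA)
next
  assume h: "act m n v [] = act m n v' []"
  obtain k where k: "bs_eq m n v (nfword (act m n v []) @ gpow GA k)" using L2[OF assms] by blast
  obtain k' where k': "bs_eq m n v' (nfword (act m n v []) @ gpow GA k')" using L2[OF assms, of v'] h by auto
  have "v' @ gpow GA (k - k') = v' @ gpow GA (k - k')" ..
  have "bs_eq m n (v' @ gpow GA (k - k')) ((nfword (act m n v []) @ gpow GA k') @ gpow GA (k - k'))"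
    by (rule bs_eq_congR, rule k')
  also have "\<dots> = nfword (act m n v []) @ (gpow GA k' @ gpow GA (k - k'))" by simp
  also have "bs_eq m n \<dots> (nfword (act m n v []) @ gpow GA (k' + (k - k')))" by (rule bs_eq_congL, rule gpow_add)
  also have "bs_eq m n \<dots> v" using bs_sym[OF k] by simp
  finally have "bs_cls m n v = bs_cls m n (v' @ gpow GA (k - k'))" by (simp add: cls_eq_iff bs_sym)
  then show "bs_cls m n v \<in> aline m n v'" by (auto simp: aline_def)
qed

lemma aline_eq: assumes "m \<noteq> 0" "n \<noteq> 0"
  shows "aline m n v = aline m n v' \<longleftrightarrow> act m n v [] = act m n v' []"
proof
  have "bs_cls m n v = bs_cls m n (v @ gpow GA 0)" by simp
  then have "bs_cls m n v \<in> aline m n v" unfolding aline_def by blast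
  moreover assume "aline m n v = aline m n v'"
  ultimately show "act m n v [] = act m n v' []" using K[OF assms] by simp
next
  assume h: "act m n v [] = act m n v' []"
  have "z \<in> aline m n v'" if zin: "z \<in> aline m n v" and hh: "act m n v [] = act m n v' []" for z v v'
  proof -
    obtain k where z: "z = bs_cls m n (v @ gpow GA k)" using zin unfolding aline_def by blast
    have "act m n (v @ gpow GA k) [] = act m n v' []" using hh by (simp add: act_append act_gpowA)
    then show ?thesis using K[OF assms] z by simp
  qed
  then show "aline m n v = aline m n v'" using h
    by (metis subsetI subset_antisym)
qed

lemma tline_inter: assumes "tline m n v \<inter> tline m n w \<noteq> {}" shows "tline m n v = tline m n w"
proof -
  obtain i j where ij: "bs_cls m n (v @ gpow GT i) = bs_cls m n (w @ gpow GT j)"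
    using assms by (auto simp: tline_def)
  then have e: "bs_eq m n (v @ gpow GT i) (w @ gpow GT j)" by (simp add: cls_eq_iff)
  have sub: "tline m n v \<subseteq> tline m n w" if e: "bs_eq m n (v @ gpow GT i) (w @ gpow GT j)" for v w i j
  proof
    fix z assume "z \<in> tline m n v"
    then obtain k where z: "z = bs_cls m n (v @ gpow GT k)" by (auto simp: tline_def)
    have "bs_eq m n (v @ gpow GT k) (v @ (gpow GT i @ gpow GT (k - i)))"
      by (rule bs_eq_congL, rule bs_sym) (use gpow_add[of m n GT i "k-i"] in simp)
    also have "\<dots> = (v @ gpow GT i) @ gpow GT (k - i)" by simp
    also have "bs_eq m n \<dots> ((w @ gpow GT j) @ gpow GT (k - i))" by (rule bs_eq_congR, rule e)
    also have "\<dots> = w @ (gpow GT j @ gpow GT (k - i))" by simp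
    also have "bs_eq m n \<dots> (w @ gpow GT (j + (k - i)))" by (rule bs_eq_congL, rule gpow_add)
    finally have "z = bs_cls m n (w @ gpow GT (j + (k - i)))" using z by (simp add: cls_eq_iff)
    then show "z \<in> tline m n w" by (auto simp: tline_def)
  qed
  show ?thesis using sub[OF e] sub[OF bs_sym[OF e]] by blast
qed

lemma Lverts_a: "u \<in> Lverts m n \<Longrightarrow> fst u \<Longrightarrow> \<exists>w. u = (True, aline m n w)"
  by (auto simp: Lverts_def)
lemma Lverts_t: "u \<in> Lverts m n \<Longrightarrow> \<not> fst u \<Longrightarrow> \<exists>w. u = (False, tline m n w)"
  by (auto simp: Lverts_def)

definition Tp :: "int \<Rightarrow> (int \<times> bool) list" where
  "Tp k = (if k \<ge> 0 then replicate (nat k) (0,True) else replicate (nat (-k)) (0,False))"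

lemma act_gpowT: "act m n (gpow GT k) [] = Tp k"
proof -
  have pos: "act m n (replicate j (GT,b)) [] = replicate j (0,b)" for j b
  proof (induction j)
    case (Suc j) then show ?case by (cases j) (simp_all add: act_Cons al_def tlet_def)
  qed simp
  show ?thesis by (simp add: gpow_def Tp_def pos)
qed

lemma nf_Tp: assumes "m \<noteq> 0" "n \<noteq> 0" shows "nf m n (Tp k)"
proof -
  have "nf m n (replicate j (0,b))" for j b
    by (induction j) (simp_all add: assms, case_tac j, auto)
  then show ?thesis by (simp add: Tp_def)
qed

definition winv :: "word \<Rightarrow> word" where "winv w = rev (map inv_letter w)"

lemma act_winv: assumes "m \<noteq> 0" "n \<noteq> 0" "nf m n s" shows "act m n (winv w) (act m n w s) = s"
proof (induction w)
  case Nil then show ?case by (simp add: winv_def)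
next
  case (Cons x w)
  have "nf m n (act m n w s)" using nf_act assms by simp
  then show ?case using Cons al_inv[of m n "act m n w s" x] by (simp add: winv_def act_append act_Cons)
qed

lemma winv_winv[simp]: "winv (winv w) = w" by (simp add: winv_def rev_map comp_def)

lemma act_winv2: assumes "m \<noteq> 0" "n \<noteq> 0" "nf m n s" shows "act m n w (act m n (winv w) s) = s"
  using act_winv[OF assms, of "winv w"] by simp

lemma act_inj: assumes "m \<noteq> 0" "n \<noteq> 0" "nf m n s" "nf m n s'" "act m n w s = act m n w s'" shows "s = s'"
  using act_winv[OF assms(1,2,3), of w] act_winv[OF assms(1,2,4), of w] assms(5) by metis



lemma Tp_fst: "x \<in> set (Tp k) \<Longrightarrow> fst x = 0"
  by (auto simp: Tp_def split: if_splits)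
lemma Tp_pos: "k \<ge> 1 \<Longrightarrow> Tp k = (0,True) # Tp (k - 1)"
  by (simp add: Tp_def nat_diff_distrib' replicate_Suc[symmetric] Suc_nat_eq_nat_zadd1)
lemma Tp_neg: "k \<le> -1 \<Longrightarrow> Tp k = (0,False) # Tp (k + 1)"
proof -
  assume "k \<le> -1"
  then have "nat (-k) = Suc (nat (-(k+1)))" by simp
  then show ?thesis using \<open>k \<le> -1\<close> by (simp add: Tp_def)
qed
lemma Tp0[simp]: "Tp 0 = []" by (simp add: Tp_def)
lemma Tp_len: "length (Tp k) = nat \<bar>k\<bar>" by (simp add: Tp_def)
lemma Tp_snd_inj: "map snd (Tp e) = map snd (Tp d) \<Longrightarrow> e = d"
  by (auto simp: Tp_def split: if_splits dest: arg_cong[of _ _ length])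

lemma mod_ne1: assumes "m \<noteq> 0" "\<bar>m\<bar> < \<bar>n\<bar>" shows "m mod \<bar>n\<bar> \<noteq> (0::int)"
proof
  assume "m mod \<bar>n\<bar> = 0"
  then have "\<bar>n\<bar> dvd m" by (simp add: dvd_eq_mod_eq_0)
  then have "\<bar>n\<bar> \<le> \<bar>m\<bar>" using assms(1) by (simp add: dvd_imp_le_int)
  then show False using assms by simp
qed

lemma mod_ne2: assumes "\<not> m dvd n" shows "n mod \<bar>m\<bar> \<noteq> (0::int)"
  using assms by (simp add: dvd_eq_mod_eq_0[symmetric])

lemma CC: assumes "m \<noteq> 0" "n \<noteq> 0" "\<bar>m\<bar> < \<bar>n\<bar>" "\<not> m dvd n"
    and y0: "y = Tp k0" and y1: "y = acta m n n (Tp k1)" and "y \<noteq> []" "y \<noteq> [(0,True)]"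
  shows False
proof -
  have allz: "\<forall>x \<in> set y. fst x = 0" using y0 Tp_fst by blast
  have nn: "n mod \<bar>n\<bar> = 0" "n div \<bar>n\<bar> * sgn n * m = m" using assms(2) by (simp_all add: div_abs_self sgn_sq)
  consider "k1 = 0" | "k1 = 1" | "k1 \<ge> 2" | "k1 \<le> -1" by linarith
  then show False
  proof cases
    case 1 then show False using y1 assms by simp
  next
    case 2 then have "Tp k1 = [(0,True)]" by (simp add: Tp_def)
    then show False using y1 assms nn by simp
  next
    case 3
    then have "Tp k1 = (0,True) # (0,True) # Tp (k1 - 2)" using Tp_pos[of k1] Tp_pos[of "k1 - 1"] by simp
    then have "(m mod \<bar>n\<bar>, True) \<in> set y" using y1 nn by simp
    then show False using allz mod_ne1[OF assms(1,3)] by auto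
  next
    case 4
    then have "Tp k1 = (0,False) # Tp (k1 + 1)" using Tp_neg by simp
    then have "(n mod \<bar>m\<bar>, False) \<in> set y" using y1 by simp
    then show False using allz mod_ne2[OF assms(4)] by auto
  qed
qed



lemma nf_nil[simp]: "nf m n []" by simp

lemma ONE:
  assumes mn: "m \<noteq> 0" "n \<noteq> 0" "\<bar>m\<bar> < \<bar>n\<bar>" "\<not> m dvd n"
    and u1: "u1 = (True, aline m n w1)" and u2: "u2 = (True, aline m n w2)"
    and ed: "Tedge m n (aline m n w1) (aline m n w2)"
    and u3: "u3 \<in> Lverts m n - {u1,u2}" and sub: "lkL m n u1 \<inter> lkL m n u2 \<subseteq> lkL m n u3"
  shows False
proof -
  obtain w where cw1: "bs_cls m n w \<in> aline m n w1" and cw2: "bs_cls m n (w @ [(GT,True)]) \<in> aline m n w2"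
    using ed by (auto simp: Tedge_def)
  have x1: "act m n w [] = act m n w1 []" using K[OF mn(1,2)] cw1 by simp
  have x2: "act m n w [(0,True)] = act m n w2 []" using K[OF mn(1,2)] cw2
    by (simp add: act_append act_Cons al_def tlet_def)
  have Tp1: "Tp 1 = [(0,True)]" by (simp add: Tp_def)
  define L where "L i = (False, tline m n (w @ gpow GA (i*n)))" for i :: int
  have inL: "L i \<in> lkL m n u1 \<inter> lkL m n u2" for i
  proof -
    have a: "act m n (w @ gpow GA (i*n)) [] = act m n w1 []" using x1 by (simp add: act_append act_gpowA)
    have "acta m n (i*n) [(0,True)] = [(0,True)]" by simp
    then have b: "act m n ((w @ gpow GA (i*n)) @ gpow GT 1) [] = act m n w2 []"
      using x2 nf_Tp[OF mn(1,2), of 1] by (simp add: act_append act_gpowA act_gpowT Tp1)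
    have c1: "bs_cls m n (w @ gpow GA (i*n)) \<in> tline m n (w @ gpow GA (i*n))"
      unfolding tline_def by (rule CollectI, rule exI[of _ 0]) simp
    have c2: "bs_cls m n ((w @ gpow GA (i*n)) @ gpow GT 1) \<in> tline m n (w @ gpow GA (i*n))"
      unfolding tline_def by blast
    have d1: "bs_cls m n (w @ gpow GA (i*n)) \<in> aline m n w1" using K[OF mn(1,2)] a by simp
    have d2: "bs_cls m n ((w @ gpow GA (i*n)) @ gpow GT 1) \<in> aline m n w2" using K[OF mn(1,2)] b by simp
    have inV: "L i \<in> Lverts m n" unfolding L_def Lverts_def by blast
    show ?thesis using inV c1 c2 d1 d2 unfolding lkL_def L_def u1 u2 by auto
  qed
  have L3: "L i \<in> lkL m n u3" for i using inL sub by blast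
  show False
  proof (cases "fst u3")
    case False
    then obtain v where v: "u3 = (False, tline m n v)" using u3 Lverts_t by blast
    have "L 0 \<noteq> u3" and "tline m n v \<inter> tline m n w \<noteq> {}" using L3[of 0] by (auto simp: lkL_def L_def v)
    then show False using tline_inter[of m n v w] by (simp add: L_def v)
  next
    case True
    then obtain v where v: "u3 = (True, aline m n v)" using u3 Lverts_a by blast
    define y where "y = act m n (winv w) (act m n v [])"
    have hit: "\<exists>k. acta m n (i*n) (Tp k) = y" for i
    proof -
      have "aline m n v \<inter> tline m n (w @ gpow GA (i*n)) \<noteq> {}" using L3[of i] by (auto simp: lkL_def L_def v)
      then obtain k where "bs_cls m n ((w @ gpow GA (i*n)) @ gpow GT k) \<in> aline m n v"
        unfolding tline_def by blast
      then have "act m n ((w @ gpow GA (i*n)) @ gpow GT k) [] = act m n v []" using K[OF mn(1,2)] by simp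
      then have e: "act m n w (acta m n (i*n) (Tp k)) = act m n v []"
        using nf_Tp[OF mn(1,2), of k] by (simp add: act_append act_gpowA act_gpowT)
      have "nf m n (acta m n (i*n) (Tp k))" using nf_acta[OF mn(1,2) nf_Tp[OF mn(1,2)]] .
      then have "acta m n (i*n) (Tp k) = y" using act_winv[OF mn(1,2)] e y_def by metis
      then show ?thesis by blast
    qed
    have bk: "act m n w y = act m n v []" using act_winv2[OF mn(1,2)] nf_act[OF mn(1,2)] y_def by simp
    have "y \<noteq> []"
    proof
      assume "y = []"
      then have "act m n v [] = act m n w1 []" using bk x1 by simp
      then have "u3 = u1" using aline_eq[OF mn(1,2)] v u1 by simp
      then show False using u3 by simp
    qed
    moreover have "y \<noteq> [(0,True)]"
    proof
      assume "y = [(0,True)]"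
      then have "act m n v [] = act m n w2 []" using bk x2 by simp
      then have "u3 = u2" using aline_eq[OF mn(1,2)] v u2 by simp
      then show False using u3 by simp
    qed
    moreover obtain k0 where k0: "acta m n (0*n) (Tp k0) = y" using hit by blast
    moreover obtain k1 where k1: "acta m n (1*n) (Tp k1) = y" using hit by blast
    moreover have "acta m n 0 (Tp k0) = Tp k0" by (rule acta_0[OF nf_Tp[OF mn(1,2)]])
    ultimately show False using CC[OF mn, of y k0 k1] by (metis mult_zero_left mult_1)
  qed
qed

lemma LK1a: assumes mn: "m \<noteq> 0" "n \<noteq> 0" and u1: "u1 = (True, aline m n w1)" and v: "v \<in> lkL m n u1"
  shows "\<not> fst v"
proof
  assume "fst v"
  moreover have "v \<in> Lverts m n" using v by (simp add: lkL_def)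
  ultimately obtain h where vh: "v = (True, aline m n h)" using Lverts_a by blast
  have "aline m n w1 \<inter> aline m n h \<noteq> {}" "v \<noteq> u1" using v by (auto simp: lkL_def u1 vh)
  then obtain k where "bs_cls m n (w1 @ gpow GA k) \<in> aline m n h" unfolding aline_def by blast
  then have "act m n (w1 @ gpow GA k) [] = act m n h []" using K[OF mn] by simp
  then have "act m n w1 [] = act m n h []" by (simp add: act_append act_gpowA)
  then have "aline m n w1 = aline m n h" using aline_eq[OF mn] by simp
  then show False using \<open>v \<noteq> u1\<close> by (simp add: vh u1)
qed

lemma LK1b: assumes mn: "m \<noteq> 0" "n \<noteq> 0" and u1: "u1 = (True, aline m n w1)" and v: "(False, tline m n h) \<in> lkL m n u1"
  shows "\<exists>j. act m n (h @ gpow GT j) [] = act m n w1 []"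
proof -
  have "aline m n w1 \<inter> tline m n h \<noteq> {}" using v by (auto simp: lkL_def u1)
  then obtain j where "bs_cls m n (h @ gpow GT j) \<in> aline m n w1" unfolding tline_def by blast
  then show ?thesis using K[OF mn] by blast
qed

lemma ACTGT: assumes mn: "m \<noteq> 0" "n \<noteq> 0"
  shows "act m n ((h @ gpow GT a) @ gpow GT b) [] = act m n (h @ gpow GT (a+b)) []"
proof -
  have "bs_eq m n (h @ (gpow GT a @ gpow GT b)) (h @ gpow GT (a+b))" by (rule bs_eq_congL, rule gpow_add)
  then show ?thesis using act_resp[OF mn] by simp
qed

lemma CLSGT: "bs_cls m n ((h @ gpow GT a) @ gpow GT b) = bs_cls m n (h @ gpow GT (a+b))"
proof -
  have "bs_eq m n (h @ (gpow GT a @ gpow GT b)) (h @ gpow GT (a+b))" by (rule bs_eq_congL, rule gpow_add)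
  then show ?thesis by (simp add: cls_eq_iff)
qed

lemma FIX: assumes "acta m n c (Tp d) = Tp d" "d \<noteq> 0"
  shows "acta m n c (Tp (sgn d)) = Tp (sgn d)"
proof (cases "d > 0")
  case True
  then have "Tp d = (0,True) # Tp (d - 1)" using Tp_pos by simp
  then have "c mod \<bar>n\<bar> = 0" using assms(1) by simp
  then show ?thesis using True by (simp add: Tp_def)
next
  case False
  then have "Tp d = (0,False) # Tp (d + 1)" using Tp_neg assms(2) by simp
  then have "c mod \<bar>m\<bar> = 0" using assms(1) by simp
  then show ?thesis using False assms(2) by (simp add: Tp_def)
qed

lemma stab: assumes mn: "m \<noteq> 0" "n \<noteq> 0" and "act m n p [] = []"
  shows "\<exists>c. \<forall>s. nf m n s \<longrightarrow> act m n p s = acta m n c s"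
proof -
  obtain c where "bs_eq m n p (nfword (act m n p []) @ gpow GA c)" using L2[OF mn] by blast
  then have "bs_eq m n p (gpow GA c)" using assms(3) by simp
  then show ?thesis using act_resp[OF mn] act_gpowA by metis
qed

lemma TWO:
  assumes mn: "m \<noteq> 0" "n \<noteq> 0"
    and u1: "u1 = (True, aline m n w1)" and u2: "u2 = (True, aline m n w2)"
    and neq: "aline m n w1 \<noteq> aline m n w2" and nadj: "\<not> Tadj m n (aline m n w1) (aline m n w2)"
  shows "\<exists>u3 \<in> Lverts m n - {u1, u2}. lkL m n u1 \<inter> lkL m n u2 \<subseteq> lkL m n u3"
proof (cases "lkL m n u1 \<inter> lkL m n u2 = {}")
  case True
  have "(False, tline m n []) \<in> Lverts m n - {u1, u2}" by (auto simp: Lverts_def u1 u2)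
  then show ?thesis using True by blast
next
  case False
  then obtain v0 where v0: "v0 \<in> lkL m n u1" "v0 \<in> lkL m n u2" by blast
  have "v0 \<in> Lverts m n" using v0 by (simp add: lkL_def)
  then obtain g where g: "v0 = (False, tline m n g)" using LK1a[OF mn u1 v0(1)] Lverts_t by blast
  obtain k1 where k1: "act m n (g @ gpow GT k1) [] = act m n w1 []" using LK1b[OF mn u1] v0 g by blast
  obtain k2 where k2: "act m n (g @ gpow GT k2) [] = act m n w2 []" using LK1b[OF mn u2] v0 g by blast
  define g' where "g' = g @ gpow GT k1"
  define d where "d = k2 - k1"
  have X1: "act m n g' [] = act m n w1 []" using k1 g'_def by simp
  have X2: "act m n g' (Tp d) = act m n w2 []"
    using ACTGT[OF mn, of g k1 d] k2 by (simp add: g'_def d_def act_append act_gpowT)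
  have d0: "d \<noteq> 0"
  proof
    assume "d = 0"
    then have "act m n w1 [] = act m n w2 []" using X1 X2 by simp
    then show False using neq aline_eq[OF mn] by simp
  qed
  have d1: "d \<noteq> 1"
  proof
    assume "d = 1"
    have "bs_cls m n g' \<in> aline m n w1" using K[OF mn] X1 by simp
    moreover have "act m n (g' @ [(GT,True)]) [] = act m n w2 []"
      using X2 \<open>d = 1\<close> by (simp add: act_append act_Cons al_def tlet_def Tp_def)
    then have "bs_cls m n (g' @ [(GT,True)]) \<in> aline m n w2" using K[OF mn] by simp
    ultimately have "Tedge m n (aline m n w1) (aline m n w2)" unfolding Tedge_def Tverts_def by blast
    then show False using nadj by (simp add: Tadj_def)
  qed
  have dm1: "d \<noteq> -1"
  proof
    assume "d = -1"
    have "act m n (g' @ [(GT,False)]) [] = act m n w2 []"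
      using X2 \<open>d = -1\<close> by (simp add: act_append act_Cons al_def tlet_def Tp_def)
    then have "bs_cls m n (g' @ [(GT,False)]) \<in> aline m n w2" using K[OF mn] by simp
    moreover have "act m n ((g' @ [(GT,False)]) @ [(GT,True)]) [] = act m n w1 []"
      using X1 by (simp add: act_append act_Cons al_def tlet_def)
    then have "bs_cls m n ((g' @ [(GT,False)]) @ [(GT,True)]) \<in> aline m n w1" using K[OF mn] by blast
    ultimately have "Tedge m n (aline m n w2) (aline m n w1)" unfolding Tedge_def Tverts_def by blast
    then show False using nadj by (simp add: Tadj_def)
  qed
  define \<sigma> where "\<sigma> = sgn d"
  have Tps: "Tp \<sigma> \<noteq> []" using d0 by (simp add: \<sigma>_def Tp_def sgn_if)
  have Tpd: "Tp \<sigma> \<noteq> Tp d"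
  proof
    assume "Tp \<sigma> = Tp d"
    then have "nat \<bar>\<sigma>\<bar> = nat \<bar>d\<bar>" using Tp_len by metis
    then show False using d0 d1 dm1 by (simp add: \<sigma>_def sgn_if split: if_splits)
  qed
  define u3 where "u3 = (True, aline m n (g' @ gpow GT \<sigma>))"
  have y: "act m n (g' @ gpow GT \<sigma>) [] = act m n g' (Tp \<sigma>)" by (simp add: act_append act_gpowT)
  have u3L: "u3 \<in> Lverts m n" by (auto simp: u3_def Lverts_def)
  have u31: "u3 \<noteq> u1"
  proof
    assume "u3 = u1"
    then have "act m n g' (Tp \<sigma>) = act m n g' []" using aline_eq[OF mn] y X1 by (simp add: u3_def u1)
    then show False using act_inj[OF mn nf_Tp[OF mn] nf_nil] Tps by blast
  qed
  have u32: "u3 \<noteq> u2"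
  proof
    assume "u3 = u2"
    then have "act m n g' (Tp \<sigma>) = act m n g' (Tp d)" using aline_eq[OF mn] y X2 by (simp add: u3_def u2)
    then show False using act_inj[OF mn nf_Tp[OF mn] nf_Tp[OF mn]] Tpd by blast
  qed
  have sub: "v \<in> lkL m n u3" if v1: "v \<in> lkL m n u1" and v2: "v \<in> lkL m n u2" for v
  proof -
    have vL: "v \<in> Lverts m n" using v1 by (simp add: lkL_def)
    then obtain h where h: "v = (False, tline m n h)" using LK1a[OF mn u1 v1] Lverts_t by blast
    obtain j1 where j1: "act m n (h @ gpow GT j1) [] = act m n w1 []" using LK1b[OF mn u1] v1 h by blast
    obtain j2 where j2: "act m n (h @ gpow GT j2) [] = act m n w2 []" using LK1b[OF mn u2] v2 h by blast
    define h' where "h' = h @ gpow GT j1"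
    define e where "e = j2 - j1"
    have H1: "act m n h' [] = act m n g' []" using j1 X1 h'_def by simp
    have H2: "act m n h' (Tp e) = act m n g' (Tp d)"
      using ACTGT[OF mn, of h j1 e] j2 X2 by (simp add: h'_def e_def act_append act_gpowT)
    define p where "p = winv g' @ h'"
    have "act m n p [] = []" using H1 act_winv[OF mn nf_nil] by (simp add: p_def act_append)
    then obtain c where c: "\<And>s. nf m n s \<Longrightarrow> act m n p s = acta m n c s" using stab[OF mn] by blast
    have "acta m n c (Tp e) = act m n p (Tp e)" using c nf_Tp[OF mn] by simp
    also have "\<dots> = act m n (winv g') (act m n g' (Tp d))" using H2 by (simp add: p_def act_append)
    also have "\<dots> = Tp d" using act_winv[OF mn nf_Tp[OF mn]] by simp
    finally have ce: "acta m n c (Tp e) = Tp d" .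
    then have "map snd (Tp e) = map snd (Tp d)" using acta_snd by metis
    then have "e = d" using Tp_snd_inj by blast
    then have "acta m n c (Tp \<sigma>) = Tp \<sigma>" using FIX ce d0 \<sigma>_def by blast
    then have "act m n (winv g') (act m n h' (Tp \<sigma>)) = Tp \<sigma>" using c nf_Tp[OF mn] by (simp add: p_def act_append)
    then have "act m n g' (act m n (winv g') (act m n h' (Tp \<sigma>))) = act m n g' (Tp \<sigma>)" by simp
    then have hs: "act m n h' (Tp \<sigma>) = act m n g' (Tp \<sigma>)"
      using act_winv2[OF mn nf_act[OF mn nf_Tp[OF mn]]] by simp
    have "act m n (h' @ gpow GT \<sigma>) [] = act m n (g' @ gpow GT \<sigma>) []" using hs by (simp add: act_append act_gpowT)
    then have in3: "bs_cls m n (h' @ gpow GT \<sigma>) \<in> aline m n (g' @ gpow GT \<sigma>)" using K[OF mn] by simp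
    have "bs_cls m n (h' @ gpow GT \<sigma>) = bs_cls m n (h @ gpow GT (j1 + \<sigma>))" using CLSGT h'_def by simp
    then have inT: "bs_cls m n (h' @ gpow GT \<sigma>) \<in> tline m n h" unfolding tline_def by blast
    show ?thesis using vL in3 inT by (auto simp: lkL_def h u3_def)
  qed
  show ?thesis using u3L u31 u32 sub by blast
qed


theorem lemma3p8:
  fixes m n :: int and u1 u2 :: lvert
  assumes "m \<noteq> 0" and "n \<noteq> 0" and "\<bar>m\<bar> < \<bar>n\<bar>" and "\<not> m dvd n"
    and "u1 \<in> Lverts m n" and "fst u1" and "u2 \<in> Lverts m n" and "fst u2"
    and "Tless m n (snd u1) (snd u2) \<or> Tless m n (snd u2) (snd u1)"
  shows "Tadj m n (snd u1) (snd u2) \<longleftrightarrow>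
    \<not> (\<exists>u3 \<in> Lverts m n - {u1, u2}. lkL m n u1 \<inter> lkL m n u2 \<subseteq> lkL m n u3)"
proof -
  note mn = assms(1-4)
  obtain w1 where u1e: "u1 = (True, aline m n w1)" using Lverts_a assms(5,6) by blast
  obtain w2 where u2e: "u2 = (True, aline m n w2)" using Lverts_a assms(7,8) by blast
  have neq: "aline m n w1 \<noteq> aline m n w2" using assms(9) by (auto simp: Tless_def u1e u2e)
  show ?thesis
  proof
    assume adj: "Tadj m n (snd u1) (snd u2)"
    show "\<not> (\<exists>u3 \<in> Lverts m n - {u1, u2}. lkL m n u1 \<inter> lkL m n u2 \<subseteq> lkL m n u3)"
    proof
      assume "\<exists>u3 \<in> Lverts m n - {u1, u2}. lkL m n u1 \<inter> lkL m n u2 \<subseteq> lkL m n u3"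
      then obtain u3 where u3: "u3 \<in> Lverts m n - {u1, u2}" and sub: "lkL m n u1 \<inter> lkL m n u2 \<subseteq> lkL m n u3"
        by blast
      have u3': "u3 \<in> Lverts m n - {u2, u1}" using u3 by blast
      have sub': "lkL m n u2 \<inter> lkL m n u1 \<subseteq> lkL m n u3" using sub by blast
      from adj consider "Tedge m n (aline m n w1) (aline m n w2)" | "Tedge m n (aline m n w2) (aline m n w1)"
        by (auto simp: Tadj_def u1e u2e)
      then show False
      proof cases
        case 1 show False by (rule ONE[OF mn u1e u2e 1 u3 sub])
      next
        case 2 show False by (rule ONE[OF mn u2e u1e 2 u3' sub'])
      qed
    qed
  next
    assume nex: "\<not> (\<exists>u3 \<in> Lverts m n - {u1, u2}. lkL m n u1 \<inter> lkL m n u2 \<subseteq> lkL m n u3)"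
    show "Tadj m n (snd u1) (snd u2)"
    proof (rule ccontr)
      assume "\<not> Tadj m n (snd u1) (snd u2)"
      then have "\<not> Tadj m n (aline m n w1) (aline m n w2)" by (simp add: u1e u2e)
      then show False using TWO[OF mn(1,2) u1e u2e neq] nex by blast
    qed
  qed
qed

end
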